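(* Let $p$ be a prime, and let $k,n,m,n_0,m_0$ be nonnegative integers such that $k\ge 1$ and $0\le n_0,m_0\le p-1$. If $p\ge 5$, then $$\binom{np^k+n_0}{mp^k+m_0}\equiv \binom{np^{\lfloor (k-1)/3\rfloor}}{mp^{\lfloor (k-1)/3\rfloor}}\binom{n_0}{m_0}\pmod{p^k}.$$ Furthermore, for $p=2$, $$\binom{n2^k+n_0}{m2^k+m_0}\equiv \binom{n2^{\lfloor k/2\rfloor}}{m2^{\lfloor k/2\rfloor}}\binom{n_0}{m_0}\pmod{2^k},$$ and for $p=3$, $$\binom{n3^k+n_0}{m3^k+m_0}\equiv \binom{n3^{\lfloor (k-1)/2\rfloor}}{m3^{\lfloor (k-1)/2\rfloor}}\binom{n_0}{m_0}\pmod{3^k}.$$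
   Context: $\lfloor a\rfloor$ denotes the greatest integer less than or equal to $a$. Binomial coefficients use the conventions $\binom{0}{0}=1$ and $\binom{l}{r}=0$ if $l<r$. *)

theory Defs
  imports "HOL-Number_Theory.Number_Theory"
begin

end

theory Submission imports Defs begin

lemma prod_expand:
  fixes v :: "'a \<Rightarrow> int"
  assumes "finite A"
  shows "d^2 dvd (\<Prod>j\<in>A. v j + d) - (\<Prod>j\<in>A. v j) - d * (\<Sum>i\<in>A. \<Prod>j\<in>A-{i}. v j)"
  using assms
proof (induction A rule: finite_induct)
  case empty
  then show ?case by simp
next
  case (insert a A)
  have S: "(\<Sum>i\<in>insert a A. \<Prod>j\<in>insert a A-{i}. v j) = (\<Prod>j\<in>A. v j) + v a * (\<Sum>i\<in>A. \<Prod>j\<in>A-{i}. v j)"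
  proof -
    have "(\<Sum>i\<in>insert a A. \<Prod>j\<in>insert a A-{i}. v j) = (\<Prod>j\<in>insert a A-{a}. v j) + (\<Sum>i\<in>A. \<Prod>j\<in>insert a A-{i}. v j)"
      using insert by (simp add: sum.insert)
    also have "(\<Prod>j\<in>insert a A-{a}. v j) = (\<Prod>j\<in>A. v j)" using insert by simp
    also have "(\<Sum>i\<in>A. \<Prod>j\<in>insert a A-{i}. v j) = (\<Sum>i\<in>A. v a * (\<Prod>j\<in>A-{i}. v j))"
    proof (rule sum.cong[OF refl])
      fix i assume "i \<in> A"
      then have "insert a A - {i} = insert a (A - {i})" using insert by auto
      then show "(\<Prod>j\<in>insert a A-{i}. v j) = v a * (\<Prod>j\<in>A-{i}. v j)"
        using insert by simp
    qed
    finally show ?thesis by (simp add: sum_distrib_left)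
  qed
  from insert.IH obtain X where X: "(\<Prod>j\<in>A. v j + d) - (\<Prod>j\<in>A. v j) - d * (\<Sum>i\<in>A. \<Prod>j\<in>A-{i}. v j) = d^2 * X"
    by (auto elim: dvdE)
  have "(\<Prod>j\<in>insert a A. v j + d) - (\<Prod>j\<in>insert a A. v j) - d * (\<Sum>i\<in>insert a A. \<Prod>j\<in>insert a A-{i}. v j)
     = (v a + d) * (\<Prod>j\<in>A. v j + d) - v a * (\<Prod>j\<in>A. v j) - d * ((\<Prod>j\<in>A. v j) + v a * (\<Sum>i\<in>A. \<Prod>j\<in>A-{i}. v j))"
    using insert S by simp
  also have "\<dots> = d^2 * ((\<Sum>i\<in>A. \<Prod>j\<in>A-{i}. v j) + v a * X + d * X)"
    using X by (simp add: algebra_simps power2_eq_square)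
  finally show ?case by simp
qed

lemma endo_bij: "finite A \<Longrightarrow> f ` A \<subseteq> A \<Longrightarrow> inj_on f A \<Longrightarrow> bij_betw f A A"
  by (simp add: bij_betw_def endo_inj_surj)

locale ppow = fixes p r :: nat assumes p: "prime p" and r: "r \<ge> 1"
begin

definition Q :: int where "Q = int p ^ r"
definition R :: "int set" where "R = {i\<in>{1..<Q}. coprime i Q}"

lemma p2: "p \<ge> 2" using p prime_ge_2_nat by blast
lemma Q_gt1: "Q > 1"
proof -
  have "int p ^ 1 \<le> int p ^ r" using p2 r by (intro power_increasing) auto
  then have "Q \<ge> int p" unfolding Q_def by simp
  then show ?thesis using p2 by linarith
qed
lemma finR: "finite R" by (rule finite_subset[of _ "{1..<Q}"]) (auto simp: R_def)
lemma p_dvd_Q: "int p dvd Q" unfolding Q_def using r by (simp add: dvd_power)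
lemma primep: "prime (int p)" using p by simp
lemma coprime_Q_iff: "coprime i Q \<longleftrightarrow> coprime i (int p)"
  unfolding Q_def using r by simp
lemma coprime_p_iff: "coprime i (int p) \<longleftrightarrow> \<not> int p dvd i"
  using primep by (metis coprime_commute prime_imp_coprime coprime_absorb_left prime_gt_1_int not_prime_unit
       is_unit_right_imp_coprime coprime_common_divisor dvd_refl)

lemma R_mem: "i \<in> R \<longleftrightarrow> 1 \<le> i \<and> i < Q \<and> coprime i Q" unfolding R_def by auto

lemma refl_bij: "bij_betw (\<lambda>i. Q - i) R R"
proof (rule endo_bij[OF finR])
  show "(\<lambda>i. Q - i) ` R \<subseteq> R"
  proof
    fix x assume "x \<in> (\<lambda>i. Q - i) ` R"
    then obtain i where i: "i \<in> R" "x = Q - i" by auto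
    have "\<not> int p dvd (Q - i)"
    proof
      assume "int p dvd (Q - i)"
      then have "int p dvd Q - (Q - i)" using p_dvd_Q by (rule dvd_diff[rotated])
      then show False using i(1) unfolding R_mem coprime_Q_iff coprime_p_iff by simp
    qed
    then have "coprime (Q - i) Q" unfolding coprime_Q_iff coprime_p_iff .
    then show "x \<in> R" using i unfolding R_mem by auto
  qed
  show "inj_on (\<lambda>i. Q - i) R" by (auto simp: inj_on_def)
qed


lemma R_p: "i \<in> R \<Longrightarrow> \<not> int p dvd i" unfolding R_mem coprime_Q_iff coprime_p_iff by simp

lemma mem_R_I: "0 \<le> i \<Longrightarrow> i < Q \<Longrightarrow> \<not> int p dvd i \<Longrightarrow> i \<in> R"
  unfolding R_mem coprime_Q_iff coprime_p_iff
  by (cases "i = 0") auto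

lemma mult_bij: assumes a: "\<not> int p dvd a" shows "bij_betw (\<lambda>i. a*i mod Q) R R"
proof (rule endo_bij[OF finR])
  show "(\<lambda>i. a*i mod Q) ` R \<subseteq> R"
  proof
    fix x assume "x \<in> (\<lambda>i. a*i mod Q) ` R"
    then obtain i where i: "i \<in> R" "x = a*i mod Q" by auto
    have "\<not> int p dvd x"
    proof
      assume h: "int p dvd x"
      have "a * i = Q * (a*i div Q) + x" using i(2) by simp
      then have "int p dvd a * i" using h p_dvd_Q by (metis dvd_add dvd_mult2)
      then show False using a R_p[OF i(1)] primep prime_dvd_mult_iff by blast
    qed
    then show "x \<in> R" using i(2) Q_gt1 by (intro mem_R_I) auto
  qed
  show "inj_on (\<lambda>i. a*i mod Q) R"
  proof (rule inj_onI)
    fix i j assume ij: "i \<in> R" "j \<in> R" "a*i mod Q = a*j mod Q"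
    have "coprime a Q" unfolding coprime_Q_iff coprime_p_iff using a .
    then have "[i = j] (mod Q)" using ij(3) cong_mult_lcancel unfolding cong_def by blast
    then show "i = j" using ij(1,2) unfolding R_mem cong_def by simp
  qed
qed

abbreviation u where "u i \<equiv> modular_inverse Q i"

lemma u_cong: "i \<in> R \<Longrightarrow> [i * u i = 1] (mod Q)"
  by (rule cong_modular_inverse1) (simp add: R_mem)

lemma u_R: assumes "i \<in> R" shows "u i \<in> R"
proof -
  have c: "coprime (u i) Q" using assms by (intro coprime_modular_inverse) (simp add: R_mem)
  have "u i \<noteq> 0" using c Q_gt1 by auto
  then show ?thesis using c Q_gt1 modular_inverse_int_nonneg[of Q i] modular_inverse_int_less[of Q i]
    unfolding R_mem by auto
qed

lemma u_u: assumes "i \<in> R" shows "u (u i) = i"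
proof (rule modular_inverse_int_eqI)
  show "i \<in> {0..<Q}" using assms unfolding R_mem by auto
  show "[u i * i = 1] (mod Q)" using u_cong[OF assms] by (simp add: mult.commute)
qed

lemma inv_bij: "bij_betw u R R"
  by (rule endo_bij[OF finR]) (auto simp: u_R intro!: inj_onI dest: u_u, metis u_u)

lemma sum_sq: assumes p5: "p \<ge> 5" shows "Q dvd (\<Sum>i\<in>R. i^2)"
proof -
  let ?S = "\<Sum>i\<in>R. i^2"
  have "\<not> int p dvd 2"
  proof
    assume "int p dvd 2" then have "p dvd 2" by presburger
    then show False using p5 by (auto dest: dvd_imp_le)
  qed
  then have "(\<Sum>i\<in>R. (2*i mod Q)^2) = ?S" using sum.reindex_bij_betw[OF mult_bij, of 2 "\<lambda>i. i^2"] by simp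
  moreover have "[(\<Sum>i\<in>R. (2*i mod Q)^2) = (\<Sum>i\<in>R. (2*i)^2)] (mod Q)"
    by (intro cong_sum cong_pow) (simp add: cong_def)
  moreover have "(\<Sum>i\<in>R. (2*i)^2) = 4 * ?S" by (simp add: sum_distrib_left power_mult_distrib)
  ultimately have "[?S = 4 * ?S] (mod Q)" by simp
  then have "Q dvd 3 * ?S" unfolding cong_iff_dvd_diff by (simp add: dvd_diff_commute algebra_simps)
  moreover have "coprime Q 3"
  proof -
    have "\<not> int p dvd 3"
    proof
      assume "int p dvd 3" then have "p dvd 3" by presburger
      then show False using p5 by (auto dest: dvd_imp_le)
    qed
    then show ?thesis using coprime_Q_iff coprime_p_iff coprime_commute by blast
  qed
  ultimately show ?thesis using coprime_dvd_mult_right_iff by blast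
qed


lemma sigma0: assumes p5: "p \<ge> 5" shows "Q dvd (\<Sum>i\<in>R. \<Prod>j\<in>R-{i}. j*(Q-j))"
proof -
  let ?v = "\<lambda>j. j*(Q-j)"
  let ?P = "\<Prod>j\<in>R. ?v j"
  have c: "[(\<Prod>j\<in>R-{i}. ?v j) = - ?P * (u i)^2] (mod Q)" if i: "i \<in> R" for i
  proof -
    have P: "?P = ?v i * (\<Prod>j\<in>R-{i}. ?v j)" using i finR by (simp add: prod.remove)
    have "[?v i * (u i)^2 = (i*Q) * (u i)^2 - (i * u i)^2] (mod Q)"
      by (simp add: algebra_simps power2_eq_square)
    moreover have "[(i*Q) * (u i)^2 - (i * u i)^2 = 0 - 1^2] (mod Q)"
      by (intro cong_diff cong_pow u_cong[OF i]) (simp add: cong_def)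
    ultimately have vu: "[?v i * (u i)^2 = -1] (mod Q)" using cong_trans by fastforce
    have "- ?P * (u i)^2 = - (?v i * (u i)^2) * (\<Prod>j\<in>R-{i}. ?v j)" using P by simp
    also have "[\<dots> = - (-1) * (\<Prod>j\<in>R-{i}. ?v j)] (mod Q)"
      by (intro cong_mult cong_minus_minus_iff[THEN iffD2] vu cong_refl)
    finally show ?thesis by (simp add: cong_sym)
  qed
  have "[(\<Sum>i\<in>R. \<Prod>j\<in>R-{i}. ?v j) = (\<Sum>i\<in>R. - ?P * (u i)^2)] (mod Q)"
    by (intro cong_sum c)
  moreover have "(\<Sum>i\<in>R. - ?P * (u i)^2) = - ?P * (\<Sum>i\<in>R. i^2)"
  proof -
    have "(\<Sum>i\<in>R. (u i)^2) = (\<Sum>i\<in>R. i^2)" using sum.reindex_bij_betw[OF inv_bij, of "\<lambda>i. i^2"] by simp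
    moreover have "(\<Sum>i\<in>R. - ?P * (u i)^2) = - ?P * (\<Sum>i\<in>R. (u i)^2)" by (simp add: sum_distrib_left)
    ultimately show ?thesis by simp
  qed
  moreover have "Q dvd - ?P * (\<Sum>i\<in>R. i^2)" using sum_sq[OF p5] by simp
  ultimately show ?thesis using cong_dvd_iff by metis
qed

definition uGi :: "int \<Rightarrow> int" where "uGi t = (\<Prod>i\<in>R. t*Q + i)"

lemma sq_eq: "uGi t ^ 2 = (\<Prod>i\<in>R. i*(Q-i) + (t^2+t)*Q^2)"
proof -
  have "(\<Prod>i\<in>R. t*Q + (Q - i)) = uGi t"
    using prod.reindex_bij_betw[OF refl_bij, of "\<lambda>i. t*Q+i"] by (simp add: uGi_def)
  then have "uGi t ^ 2 = uGi t * (\<Prod>i\<in>R. t*Q + (Q - i))"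
    by (simp add: power2_eq_square)
  also have "\<dots> = (\<Prod>i\<in>R. (t*Q + i) * (t*Q + (Q - i)))"
    by (simp only: uGi_def prod.distrib)
  also have "\<dots> = (\<Prod>i\<in>R. i*(Q-i) + (t^2+t)*Q^2)"
    by (intro prod.cong refl) (simp add: algebra_simps power2_eq_square)
  finally show ?thesis .
qed

lemma uGi0_sq: "uGi 0 ^ 2 = (\<Prod>i\<in>R. i*(Q-i))" using sq_eq[of 0] by simp

lemma sq_cong5: assumes p5: "p \<ge> 5" shows "Q^3 dvd uGi t ^ 2 - uGi 0 ^ 2"
proof -
  define d where "d = (t^2+t)*Q^2"
  define \<sigma> where "\<sigma> = (\<Sum>i\<in>R. \<Prod>j\<in>R-{i}. j*(Q-j))"
  have t2: "uGi t ^ 2 = (\<Prod>j\<in>R. j*(Q-j) + d)" unfolding sq_eq d_def ..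
  have e: "d^2 dvd uGi t ^ 2 - uGi 0 ^ 2 - d * \<sigma>"
    using prod_expand[OF finR, where v="\<lambda>j. j*(Q-j)" and d=d] unfolding t2 uGi0_sq \<sigma>_def .
  have "d^2 = Q^3 * ((t^2+t)^2 * Q)" unfolding d_def by (simp add: power_mult_distrib power2_eq_square power3_eq_cube)
  then have "Q^3 dvd d^2" by simp
  with e have 1: "Q^3 dvd uGi t ^ 2 - uGi 0 ^ 2 - d * \<sigma>" using dvd_trans by blast
  obtain s where "\<sigma> = Q * s" using sigma0[OF p5] unfolding \<sigma>_def by (auto elim: dvdE)
  then have "d * \<sigma> = Q^3 * ((t^2+t)*s)" unfolding d_def by (simp add: power2_eq_square power3_eq_cube)
  then have "Q^3 dvd d * \<sigma>" by simp
  with 1 have "Q^3 dvd (uGi t ^ 2 - uGi 0 ^ 2 - d * \<sigma>) + d * \<sigma>" by (rule dvd_add)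
  then show ?thesis by simp
qed

lemma sq_cong: "Q^2 dvd uGi t ^ 2 - uGi 0 ^ 2"
proof -
  have "[(\<Prod>i\<in>R. i*(Q-i) + (t^2+t)*Q^2) = (\<Prod>i\<in>R. i*(Q-i) + 0)] (mod Q^2)"
    by (intro cong_prod cong_add cong_refl) (simp add: cong_def)
  then show ?thesis unfolding sq_eq uGi0_sq cong_iff_dvd_diff by simp
qed

lemma lin_cong: "[uGi t = uGi 0] (mod Q)"
  unfolding uGi_def by (intro cong_prod) (simp add: cong_def)

lemma uGi0_coprime: "\<not> int p dvd uGi 0"
  unfolding uGi_def using prime_dvd_prod_iff[OF finR primep] R_p by auto


lemma Q_pow: "Q^a = int p ^ (r*a)" unfolding Q_def by (simp add: power_mult)

lemma root_odd: assumes odd: "odd p" and h: "Q^a dvd uGi t ^ 2 - uGi 0 ^ 2"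
  shows "Q^a dvd uGi t - uGi 0"
proof -
  let ?x = "uGi t" and ?y = "uGi 0"
  obtain d' where d': "?x - ?y = Q * d'" using lin_cong[of t] unfolding cong_iff_dvd_diff by (auto elim: dvdE)
  have xy: "?x + ?y = 2 * ?y + Q * d'" using d' by simp
  have "\<not> int p dvd ?x + ?y"
  proof
    assume "int p dvd ?x + ?y"
    then have "int p dvd 2 * ?y + Q * d' - Q * d'" unfolding xy using p_dvd_Q
      by (metis dvd_diff dvd_mult2)
    then have "int p dvd 2 * ?y" by simp
    then have "int p dvd 2 \<or> int p dvd ?y" using primep prime_dvd_mult_iff by blast
    moreover have "\<not> int p dvd 2"
    proof
      assume "int p dvd 2" then have "p dvd 2" by presburger
      then have "p \<le> 2" by (auto dest: dvd_imp_le)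
      then show False using p2 odd by auto
    qed
    ultimately show False using uGi0_coprime by blast
  qed
  then have "coprime (?x + ?y) (Q^a)" unfolding Q_pow using prime_imp_power_coprime primep by blast
  then have "coprime (Q^a) (?x + ?y)" by (simp add: coprime_commute)
  moreover have "?x ^ 2 - ?y ^ 2 = (?x - ?y) * (?x + ?y)" by (simp add: power2_eq_square algebra_simps)
  ultimately show ?thesis using h coprime_dvd_mult_left_iff by metis
qed

lemma root2: assumes p2: "p = 2" and r2: "r \<ge> 2" and h: "Q^2 dvd uGi t ^ 2 - uGi 0 ^ 2"
  shows "2^(2*r-1) dvd uGi t - uGi 0"
proof -
  let ?x = "uGi t" and ?y = "uGi 0"
  obtain d' where d': "?x - ?y = Q * d'" using lin_cong[of t] unfolding cong_iff_dvd_diff by (auto elim: dvdE)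
  have Q2: "Q = 2^r" using Q_def by (simp add: p2)
  have Q: "Q = 2 * 2^(r-1)" unfolding Q2 using r2 by (simp add: power_Suc[symmetric])
  define w where "w = ?y + 2^(r-1) * d'"
  have "odd ?y" using uGi0_coprime p2 by simp
  moreover have "even (2^(r-1) :: int)" using r2 by simp
  ultimately have ow: "odd w" unfolding w_def by simp
  have "?x ^ 2 - ?y ^ 2 = (?x - ?y) * (?x + ?y)" by (simp add: power2_eq_square algebra_simps)
  also have "?x + ?y = 2 * w" unfolding w_def using d' Q by (simp add: algebra_simps)
  finally have e: "?x ^ 2 - ?y ^ 2 = (2 * Q * d') * w" using d' by simp
  have "coprime (Q^2) w" unfolding Q2 using ow by simp
  then have "Q^2 dvd 2 * Q * d'" using h unfolding e using coprime_dvd_mult_left_iff by metis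
  then have "(2 * 2^(r-1)) * (2 * 2^(r-1)) dvd (2 * 2^(r-1)) * (2 * d')" unfolding Q by (simp add: power2_eq_square mult_ac)
  then have "2 * 2^(r-1) dvd 2 * (d' :: int)" by (rule dvd_times_left_cancel_iff[THEN iffD1, rotated]) simp
  then have "2^(r-1) dvd d'" by simp
  then have "Q * 2^(r-1) dvd Q * d'" by (rule mult_dvd_mono[OF dvd_refl])
  moreover have "Q * 2^(r-1) = 2^(2*r-1)" unfolding Q2 using r2 by (simp add: power_add[symmetric])
  ultimately show ?thesis using d' by metis
qed

lemma core5: "p \<ge> 5 \<Longrightarrow> [uGi t = uGi 0] (mod int p ^ (3*r))"
  using root_odd[of 3 t] sq_cong5[of t] Q_pow[of 3] unfolding cong_iff_dvd_diff
  using prime_odd_nat[OF p] by (simp add: mult.commute)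

lemma core3: "odd p \<Longrightarrow> [uGi t = uGi 0] (mod int p ^ (2*r))"
  using root_odd[of 2 t] sq_cong[of t] Q_pow[of 2] unfolding cong_iff_dvd_diff
  by (simp add: mult.commute)

lemma core2: assumes "p = 2" shows "[uGi t = uGi 0] (mod int p ^ (2*r - 1))"
proof (cases "r \<ge> 2")
  case True then show ?thesis using root2[OF assms True sq_cong[of t]] assms unfolding cong_iff_dvd_diff by simp
next
  case False then have "r = 1" using r by simp
  then show ?thesis using lin_cong[of t] assms unfolding Q_def by simp
qed

end

definition pr :: "nat \<Rightarrow> nat \<Rightarrow> nat" where "pr x L = (\<Prod>i\<in>{1..L}. x + i)"

lemma pr_Suc: "pr x (Suc L) = pr x L * (x + Suc L)"
  unfolding pr_def by (simp add: prod.cl_ivl_Suc)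

lemma pr_0[simp]: "pr x 0 = 1" unfolding pr_def by simp

lemma fact_pr: "fact (x + L) = (fact x :: nat) * pr x L"
  by (induction L) (simp_all add: pr_Suc algebra_simps)

lemma pr_add: "pr x (a + b) = pr x a * pr (x + a) b"
  by (induction b) (simp_all add: pr_Suc algebra_simps)

lemma pr_mult: "(\<Prod>j\<in>{1..L}. p*z + p*j) = p^L * pr z L"
proof -
  have "(\<Prod>j\<in>{1..L}. p*z + p*j) = (\<Prod>j\<in>{1..L}. p * (z + j))" by (simp add: algebra_simps)
  also have "\<dots> = p^L * pr z L" by (simp add: prod.distrib pr_def)
  finally show ?thesis .
qed

lemma binom_pr: "m \<le> n \<Longrightarrow> (n choose m) * fact m = pr (n - m) m"
proof -
  assume "m \<le> n"
  then have "fact m * fact (n - m) * (n choose m) = (fact n :: nat)" by (rule binomial_fact_lemma)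
  moreover have "fact n = (fact (n - m) :: nat) * pr (n - m) m" using fact_pr[of "n-m" m] \<open>m \<le> n\<close> by simp
  ultimately have "fact (n - m) * ((n choose m) * fact m) = fact (n - m) * pr (n - m) m"
    by (simp add: mult_ac)
  then show ?thesis by (simp add: fact_nonzero)
qed

lemma fact_eq_pr: "fact L = pr 0 L" using fact_pr[of 0 L] by simp

context ppow begin

definition Rn :: "nat set" where "Rn = {i\<in>{1..p^r}. \<not> p dvd i}"
definition uGn :: "nat \<Rightarrow> nat" where "uGn x = (\<Prod>i\<in>Rn. x + i)"

lemma split_set: "{1..p^r} = Rn \<union> (\<lambda>j. p*j) ` {1..p^(r-1)}"
proof -
  have pr1: "p^r = p * p^(r-1)" using r by (simp add: power_eq_if)
  show ?thesis
  proof (intro equalityI subsetI)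
    fix i assume i: "i \<in> {1..p^r}"
    show "i \<in> Rn \<union> (\<lambda>j. p*j) ` {1..p^(r-1)}"
    proof (cases "p dvd i")
      case True
      then obtain j where j: "i = p * j" by (auto elim: dvdE)
      have "j \<ge> 1" using i j by (cases j) auto
      moreover have "j \<le> p^(r-1)" using i j pr1 p2 by simp
      ultimately show ?thesis using j by auto
    next
      case False then show ?thesis using i by (simp add: Rn_def)
    qed
  next
    fix i assume "i \<in> Rn \<union> (\<lambda>j. p*j) ` {1..p^(r-1)}"
    then show "i \<in> {1..p^r}" using pr1 p2 by (auto simp: Rn_def)
  qed
qed

lemma pr_split: "pr y (p^r) = uGn y * (\<Prod>j\<in>{1..p^(r-1)}. y + p*j)"
proof -
  have d: "Rn \<inter> (\<lambda>j. p*j) ` {1..p^(r-1)} = {}" by (auto simp: Rn_def)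
  have inj: "inj_on (\<lambda>j. p*j) {1..p^(r-1)}" using p2 by (auto simp: inj_on_def)
  have "pr y (p^r) = (\<Prod>i\<in>Rn. y + i) * (\<Prod>i\<in>(\<lambda>j. p*j) ` {1..p^(r-1)}. y + i)"
    unfolding pr_def split_set by (rule prod.union_disjoint) (auto simp: Rn_def d)
  also have "(\<Prod>i\<in>(\<lambda>j. p*j) ` {1..p^(r-1)}. y + i) = (\<Prod>j\<in>{1..p^(r-1)}. y + p*j)"
    using prod.reindex[OF inj] by simp
  finally show ?thesis by (simp add: uGn_def)
qed

lemma decomp: "pr (z*p^r) (m*p^r) = (\<Prod>t<m. uGn ((z+t)*p^r)) * p^(m*p^(r-1)) * pr (z*p^(r-1)) (m*p^(r-1))"
proof (induction m)
  case 0 then show ?case by simp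
next
  case (Suc m)
  have pr1: "p^r = p * p^(r-1)" using r by (simp add: power_eq_if)
  have e1: "Suc m * p^r = m * p^r + p^r" by simp
  have "pr (z*p^r) (Suc m*p^r) = pr (z*p^r) (m*p^r) * pr ((z+m)*p^r) (p^r)"
    unfolding e1 pr_add by (simp add: add_mult_distrib)
  also have "pr ((z+m)*p^r) (p^r) = uGn ((z+m)*p^r) * (p^(p^(r-1)) * pr ((z+m)*p^(r-1)) (p^(r-1)))"
  proof -
    have "(\<Prod>j\<in>{1..p^(r-1)}. (z+m)*p^r + p*j) = (\<Prod>j\<in>{1..p^(r-1)}. p*((z+m)*p^(r-1)) + p*j)"
      using pr1 by (simp add: mult_ac)
    then show ?thesis using pr_split pr_mult by simp
  qed
  moreover have e2: "Suc m * p^(r-1) = m * p^(r-1) + p^(r-1)" by simp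
  have "pr (z*p^(r-1)) (Suc m*p^(r-1)) = pr (z*p^(r-1)) (m*p^(r-1)) * pr ((z+m)*p^(r-1)) (p^(r-1))"
    unfolding e2 pr_add by (simp add: add_mult_distrib)
  ultimately show ?case using Suc.IH by (simp add: algebra_simps power_add)
qed


lemma Rn_R: "int ` Rn = R"
proof (intro equalityI subsetI)
  fix j assume "j \<in> int ` Rn"
  then obtain i where i: "i \<in> Rn" "j = int i" by auto
  have "i \<noteq> p^r" using i(1) r by (auto simp: Rn_def)
  then have "i < p^r" using i(1) by (auto simp: Rn_def)
  then have "int i < Q" unfolding Q_def by (metis of_nat_less_iff of_nat_power)
  moreover have "\<not> int p dvd int i" using i(1) by (simp add: Rn_def)
  ultimately show "j \<in> R" using i by (intro mem_R_I) auto
next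
  fix j assume j: "j \<in> R"
  then have j1: "1 \<le> j" "j < Q" by (auto simp: R_mem)
  define i where "i = nat j"
  have ji: "j = int i" using j1 by (simp add: i_def)
  have "\<not> int p dvd int i" using R_p[OF j] ji by simp
  then have "\<not> p dvd i" by simp
  moreover have "int i < int (p^r)" using j1 ji unfolding Q_def by simp
  ultimately have "i \<in> Rn" using j1 ji by (auto simp: Rn_def)
  then show "j \<in> int ` Rn" using ji by auto
qed

lemma uGn_int: "int (uGn (s*p^r)) = uGi (int s)"
proof -
  have "int (uGn (s*p^r)) = (\<Prod>i\<in>Rn. int s * Q + int i)" unfolding uGn_def Q_def by simp
  also have "\<dots> = (\<Prod>j\<in>int ` Rn. int s * Q + j)" by (simp add: prod.reindex)
  finally show ?thesis unfolding Rn_R uGi_def .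
qed

lemma uGn0_p: "\<not> p dvd uGn 0"
proof
  assume "p dvd uGn 0"
  then obtain i where "i \<in> Rn" "p dvd i" unfolding uGn_def using prime_dvd_prod_iff[of Rn p] p
    by (auto simp: Rn_def)
  then show False by (simp add: Rn_def)
qed

lemma binom_rel: assumes mn: "m \<le> n"
  shows "((n*p^r) choose (m*p^r)) * (\<Prod>t<m. uGn (t*p^r)) = ((n*p^(r-1)) choose (m*p^(r-1))) * (\<Prod>t<m. uGn ((n-m+t)*p^r))"
proof -
  let ?Q = "p^r" and ?Q' = "p^(r-1)" and ?c = "n - m"
  define K where "K = p^(m*?Q') * pr 0 (m*?Q')"
  have "pr 0 (m*?Q') > 0" using fact_eq_pr[of "m*?Q'"] fact_gt_zero[where 'a=nat] by metis
  then have K: "K > 0" unfolding K_def using p2 by simp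
  have "((n*?Q) choose (m*?Q)) * fact (m*?Q) = pr (?c*?Q) (m*?Q)"
    using binom_pr[of "m*?Q" "n*?Q"] mn by (simp add: diff_mult_distrib)
  also have "\<dots> = (\<Prod>t<m. uGn ((?c+t)*?Q)) * p^(m*?Q') * pr (?c*?Q') (m*?Q')" by (rule decomp)
  also have "pr (?c*?Q') (m*?Q') = ((n*?Q') choose (m*?Q')) * pr 0 (m*?Q')"
    using binom_pr[of "m*?Q'" "n*?Q'"] mn fact_eq_pr by (simp add: diff_mult_distrib)
  finally have 1: "((n*?Q) choose (m*?Q)) * fact (m*?Q) = (\<Prod>t<m. uGn ((?c+t)*?Q)) * ((n*?Q') choose (m*?Q')) * K"
    unfolding K_def by (simp add: mult_ac)
  have "fact (m*?Q) = (\<Prod>t<m. uGn (t*?Q)) * K"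
    unfolding fact_eq_pr K_def using decomp[of 0 m] by (simp add: mult_ac)
  with 1 have "(((n*?Q) choose (m*?Q)) * (\<Prod>t<m. uGn (t*?Q))) * K = ((\<Prod>t<m. uGn ((?c+t)*?Q)) * ((n*?Q') choose (m*?Q'))) * K"
    by (simp add: mult_ac)
  then show ?thesis using K by (simp add: mult_ac)
qed

lemma step: assumes cg: "\<And>s. [uGi s = uGi 0] (mod int p ^ E)"
  shows "[(n*p^r) choose (m*p^r) = (n*p^(r-1)) choose (m*p^(r-1))] (mod p^E)"
proof (cases "m \<le> n")
  case False
  then have "n*p^r < m*p^r" "n*p^(r-1) < m*p^(r-1)" using p2 by simp_all
  then show ?thesis by (simp add: binomial_eq_0)
next
  case True
  have cgn: "[uGn (s*p^r) = uGn 0] (mod p^E)" for s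
  proof -
    have "[int (uGn (s*p^r)) = int (uGn (0*p^r))] (mod int (p^E))"
      unfolding uGn_int using cg[of "int s"] by simp
    then show ?thesis unfolding cong_int_iff by simp
  qed
  have cop0: "coprime (uGn 0) (p^E)" using uGn0_p p prime_imp_power_coprime by blast
  have A: "[(\<Prod>t<m. uGn ((n-m+t)*p^r)) = (\<Prod>t<m. uGn (t*p^r))] (mod p^E)"
  proof -
    have "[(\<Prod>t<m. uGn ((n-m+t)*p^r)) = (\<Prod>t<m. uGn 0)] (mod p^E)" by (intro cong_prod cgn)
    moreover have "[(\<Prod>t<m. uGn (t*p^r)) = (\<Prod>t<m. uGn 0)] (mod p^E)" by (intro cong_prod cgn)
    ultimately show ?thesis by (meson cong_sym cong_trans)
  qed
  have cop: "coprime (\<Prod>t<m. uGn (t*p^r)) (p^E)"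
    by (intro prod_coprime_left) (meson cgn cong_imp_coprime cong_sym cop0)
  have "[((n*p^r) choose (m*p^r)) * (\<Prod>t<m. uGn (t*p^r)) = ((n*p^(r-1)) choose (m*p^(r-1))) * (\<Prod>t<m. uGn (t*p^r))] (mod p^E)"
    unfolding binom_rel[OF True] by (intro cong_mult cong_refl A)
  then show ?thesis using cong_mult_rcancel_nat[OF cop] by blast
qed

end

lemma iter:
  assumes ek: "e \<le> k"
    and H: "\<And>r n m. e + 1 \<le> r \<Longrightarrow> r \<le> k \<Longrightarrow> [(n*p^r) choose (m*p^r) = (n*p^(r-1)) choose (m*p^(r-1))] (mod M)"
  shows "[(n*p^k) choose (m*p^k) = (n*p^e) choose (m*p^e)] (mod M)"
proof -
  have "j \<le> k \<Longrightarrow> [(n*p^j) choose (m*p^j) = (n*p^e) choose (m*p^e)] (mod M)" if "e \<le> j" for j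
    using that
  proof (induction j rule: dec_induct)
    case base then show ?case by simp
  next
    case (step j)
    have "[(n*p^Suc j) choose (m*p^Suc j) = (n*p^j) choose (m*p^j)] (mod M)"
      using H[of "Suc j" n m] step by simp
    then show ?case using step by (meson cong_trans Suc_leD)
  qed
  then show ?thesis using ek by simp
qed

lemma lowdig:
  assumes p: "prime p" and k: "k \<ge> 1" and n0: "n0 \<le> p - 1" and m0: "m0 \<le> p - 1"
  shows "[(n*p^k + n0) choose (m*p^k+m0) = ((n*p^k) choose (m*p^k)) * (n0 choose m0)] (mod p^k)"
proof -
  define A where "A = n*p^k"
  define B where "B = m*p^k"
  define r where "r = B + m0"
  have pB: "p dvd B" unfolding B_def using k by (simp add: dvd_power)
  have p2: "p \<ge> 2" using p prime_ge_2_nat by blast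
  have "(A + n0) choose r = (\<Sum>i\<le>r. (n0 choose i) * (A choose (r - i)))"
    using vandermonde[where r=r and m=n0 and n=A] by (simp add: add.commute)
  also have "\<dots> = (n0 choose m0) * (A choose B) + (\<Sum>i\<in>{..r}-{m0}. (n0 choose i) * (A choose (r - i)))"
    by (subst sum.remove[of _ m0]) (auto simp: r_def)
  finally have e: "(A + n0) choose r = (n0 choose m0) * (A choose B) + (\<Sum>i\<in>{..r}-{m0}. (n0 choose i) * (A choose (r - i)))" .
  have z: "p^k dvd (n0 choose i) * (A choose (r - i))" if i: "i \<in> {..r}-{m0}" for i
  proof (cases "i \<le> n0")
    case False then show ?thesis by (simp add: binomial_eq_0)
  next
    case True
    have np: "\<not> p dvd (r - i)"
    proof
      assume h: "p dvd (r - i)"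
      show False
      proof (cases "i \<le> m0")
        case True
        then have "r - i = B + (m0 - i)" unfolding r_def by simp
        then have "p dvd m0 - i" using h pB by (simp add: dvd_add_right_iff)
        moreover have "0 < m0 - i" "m0 - i < p" using True i m0 p2 by auto
        ultimately show False by (auto dest: dvd_imp_le)
      next
        case False
        then have "B = (r - i) + (i - m0)" using i unfolding r_def by auto
        then have "p dvd i - m0" using h pB by (metis dvd_add_right_iff)
        moreover have "0 < i - m0" "i - m0 < p" using False \<open>i \<le> n0\<close> n0 p2 by auto
        ultimately show False by (auto dest: dvd_imp_le)
      qed
    qed
    then have pos: "r - i > 0" by (metis dvd_0_right gr0I)
    have "(r - i) * (A choose (r - i)) = A * ((A - 1) choose (r - i - 1))"
      using times_binomial_minus1_eq[OF pos] .
    moreover have "p^k dvd A" unfolding A_def by simp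
    ultimately have "p^k dvd (r - i) * (A choose (r - i))" by simp
    moreover have "coprime (p^k) (r - i)" using np p prime_imp_power_coprime coprime_commute by blast
    ultimately have "p^k dvd (A choose (r - i))" using coprime_dvd_mult_right_iff by blast
    then show ?thesis by simp
  qed
  have "p^k dvd (\<Sum>i\<in>{..r}-{m0}. (n0 choose i) * (A choose (r - i)))" by (intro dvd_sum z)
  then have "[(\<Sum>i\<in>{..r}-{m0}. (n0 choose i) * (A choose (r - i))) = 0] (mod p^k)"
    by (simp add: cong_0_iff)
  then have "[(A + n0) choose r = (n0 choose m0) * (A choose B) + 0] (mod p^k)"
    unfolding e by (intro cong_add cong_refl)
  then show ?thesis unfolding A_def B_def r_def by (simp add: mult.commute)
qed

theorem mainTheorem1:
  fixes p k n m n0 m0 :: nat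
  assumes "prime p" and "k \<ge> 1" and "n0 \<le> p - 1" and "m0 \<le> p - 1"
  shows "(p \<ge> 5 \<longrightarrow>
           [(n * p ^ k + n0) choose (m * p ^ k + m0)
             = ((n * p ^ ((k - 1) div 3)) choose (m * p ^ ((k - 1) div 3))) * (n0 choose m0)] (mod p ^ k))
       \<and> (p = 2 \<longrightarrow>
           [(n * 2 ^ k + n0) choose (m * 2 ^ k + m0)
             = ((n * 2 ^ (k div 2)) choose (m * 2 ^ (k div 2))) * (n0 choose m0)] (mod 2 ^ k))
       \<and> (p = 3 \<longrightarrow>
           [(n * 3 ^ k + n0) choose (m * 3 ^ k + m0)
             = ((n * 3 ^ ((k - 1) div 2)) choose (m * 3 ^ ((k - 1) div 2))) * (n0 choose m0)] (mod 3 ^ k))"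
proof -
  have low: "[(n*p^k + n0) choose (m*p^k+m0) = ((n*p^k) choose (m*p^k)) * (n0 choose m0)] (mod p^k)"
    using lowdig assms by blast
  have gen: "[(n*p^k + n0) choose (m*p^k+m0) = ((n*p^e) choose (m*p^e)) * (n0 choose m0)] (mod p^k)"
    if ek: "e \<le> k" and E: "\<And>r. e + 1 \<le> r \<Longrightarrow> k \<le> E r"
      and core: "\<And>r s. r \<ge> 1 \<Longrightarrow> [ppow.uGi p r s = ppow.uGi p r 0] (mod int p ^ E r)" for e E
  proof -
    have "[(n*p^k) choose (m*p^k) = (n*p^e) choose (m*p^e)] (mod p^k)"
    proof (rule iter[OF ek])
      fix r n m assume hr: "e + 1 \<le> r" "r \<le> k"
      interpret ppow p r using assms(1) hr by unfold_locales auto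
      have "[(n*p^r) choose (m*p^r) = (n*p^(r-1)) choose (m*p^(r-1))] (mod p^(E r))"
        by (rule step) (use core hr in auto)
      moreover have "p^k dvd p^(E r)" using E[OF hr(1)] by (simp add: le_imp_power_dvd)
      ultimately show "[(n*p^r) choose (m*p^r) = (n*p^(r-1)) choose (m*p^(r-1))] (mod p^k)"
        using cong_dvd_modulus_nat by blast
    qed
    then have "[((n*p^k) choose (m*p^k)) * (n0 choose m0) = ((n*p^e) choose (m*p^e)) * (n0 choose m0)] (mod p^k)"
      by (intro cong_mult cong_refl)
    with low show ?thesis by (rule cong_trans)
  qed
  have c5: "p \<ge> 5 \<longrightarrow> [(n * p ^ k + n0) choose (m * p ^ k + m0)
             = ((n * p ^ ((k - 1) div 3)) choose (m * p ^ ((k - 1) div 3))) * (n0 choose m0)] (mod p ^ k)"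
  proof
    assume p5: "p \<ge> 5"
    show "[(n * p ^ k + n0) choose (m * p ^ k + m0)
             = ((n * p ^ ((k - 1) div 3)) choose (m * p ^ ((k - 1) div 3))) * (n0 choose m0)] (mod p ^ k)"
    proof (rule gen[where E="\<lambda>r. 3*r"])
      show "(k - 1) div 3 \<le> k" by simp
      show "k \<le> 3 * r" if "(k - 1) div 3 + 1 \<le> r" for r using that by linarith
      show "[ppow.uGi p r s = ppow.uGi p r 0] (mod int p ^ (3 * r))" if "r \<ge> 1" for r s
      proof -
        interpret ppow p r using assms(1) that by unfold_locales auto
        show ?thesis using core5 p5 by blast
      qed
    qed
  qed
  have c3: "p = 3 \<longrightarrow> [(n * 3 ^ k + n0) choose (m * 3 ^ k + m0)
             = ((n * 3 ^ ((k - 1) div 2)) choose (m * 3 ^ ((k - 1) div 2))) * (n0 choose m0)] (mod 3 ^ k)"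
  proof
    assume p3: "p = 3"
    have "[(n * p ^ k + n0) choose (m * p ^ k + m0)
             = ((n * p ^ ((k - 1) div 2)) choose (m * p ^ ((k - 1) div 2))) * (n0 choose m0)] (mod p ^ k)"
    proof (rule gen[where E="\<lambda>r. 2*r"])
      show "(k - 1) div 2 \<le> k" by simp
      show "k \<le> 2 * r" if "(k - 1) div 2 + 1 \<le> r" for r using that by linarith
      show "[ppow.uGi p r s = ppow.uGi p r 0] (mod int p ^ (2 * r))" if "r \<ge> 1" for r s
      proof -
        interpret ppow p r using assms(1) that by unfold_locales auto
        show ?thesis using core3 p3 by simp
      qed
    qed
    then show "[(n * 3 ^ k + n0) choose (m * 3 ^ k + m0)
             = ((n * 3 ^ ((k - 1) div 2)) choose (m * 3 ^ ((k - 1) div 2))) * (n0 choose m0)] (mod 3 ^ k)"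
      using p3 by simp
  qed
  have c2: "p = 2 \<longrightarrow> [(n * 2 ^ k + n0) choose (m * 2 ^ k + m0)
             = ((n * 2 ^ (k div 2)) choose (m * 2 ^ (k div 2))) * (n0 choose m0)] (mod 2 ^ k)"
  proof
    assume hp2: "p = 2"
    have "[(n * p ^ k + n0) choose (m * p ^ k + m0)
             = ((n * p ^ (k div 2)) choose (m * p ^ (k div 2))) * (n0 choose m0)] (mod p ^ k)"
    proof (rule gen[where E="\<lambda>r. 2*r - 1"])
      show "k div 2 \<le> k" by simp
      show "k \<le> 2 * r - 1" if "k div 2 + 1 \<le> r" for r using that by linarith
      show "[ppow.uGi p r s = ppow.uGi p r 0] (mod int p ^ (2 * r - 1))" if "r \<ge> 1" for r s
      proof -
        interpret ppow p r using assms(1) that by unfold_locales auto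
        show ?thesis using core2 hp2 by blast
      qed
    qed
    then show "[(n * 2 ^ k + n0) choose (m * 2 ^ k + m0)
             = ((n * 2 ^ (k div 2)) choose (m * 2 ^ (k div 2))) * (n0 choose m0)] (mod 2 ^ k)"
      using hp2 by simp
  qed
  show ?thesis using c5 c3 c2 by blast
qed

end
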